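(* Consider the FlexPD-G iterates described in the context with $\alpha,\beta>0$ and integer $T\ge1$. For any $\bar d,\bar c,\bar g,\bar e>1$ and every $k\ge0$, \[\|\lambda^{k+1}-\lambda^*\|^2\le\frac{\bar d\bar c}{\alpha^2 s(AA')}\Big(\bar g+\frac{\bar g\alpha^2L^2}{\bar g-1}\Big)\|x^{k+1,T}-x^{k+1,T-1}\|^2+\frac{\bar d\bar c}{s(AA')(\bar c-1)}\Big(\bar e\beta^2\rho^2(A'A)+\frac{\bar eL^2}{\bar e-1}\Big)\|x^{k+1,T}-x^*\|^2+\frac{\bar d\rho^2(B)}{s(AA')(\bar d-1)}\|x^k-x^*\|^2.\]
   Context: Setting: $n$ agents are connected by a connected undirected graph with edge set $\mathcal E$, $\epsilon=|\mathcal E|$. For $x\in\mathbb R^n$ let $f(x)=\sum_{i=1}^n f_i(x_i)$, where each $f_i:\mathbb R\to\mathbb R$ is twice differentiable with $m\le f_i''\le L$ for constants $0<m\le L$; $\nabla f(x)=(f_1'(x_1),\dots,f_n'(x_n))'$. $A\in\mathbb R^{\epsilon\times n}$ is the edge–node incidence matrix (null space spanned by the all-ones vector). $B\in\mathbb R^{n\times n}$ is symmetric positive semidefinite with the same null space as $A$, off-diagonal entries nonzero only on edges, and $\rho(B)<m$. $x^*$ is the unique minimizer of $f$ subject to $Ax=0$ and $\lambda^*$ a Lagrange multiplier with $\nabla f(x^* )+A'\lambda^*=0$, $Ax^*=0$, $Bx^*=0$, chosen in the column space of $A$ (orthogonal to the null space of $A'$). FlexPD-G: given $\alpha,\beta>0$,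 $T\ge1$, $x^0$ arbitrary, $\lambda^0=0$; for $k\ge0$: $x^{k+1,0}=x^k$; for $t=1,\dots,T$, $x^{k+1,t}=x^{k+1,t-1}-\alpha\nabla f(x^{k+1,t-1})-\alpha A'\lambda^k-\alpha Bx^k$; then $x^{k+1}=x^{k+1,T}$, $\lambda^{k+1}=\lambda^k+\beta Ax^{k+1}$. Notation: $\rho(S)$ largest eigenvalue of symmetric $S$; $s(AA')$ smallest nonzero eigenvalue of $AA'$; $\|\cdot\|$ Euclidean norm. *)

theory Defs
  imports "HOL-Analysis.Analysis"
begin

text \<open>Real eigenvalues of a square real matrix.\<close>
definition eigvals :: "real^'n^'n \<Rightarrow> real set" where
  "eigvals S = {\<mu>. \<exists>v. v \<noteq> 0 \<and> S *v v = \<mu> *\<^sub>R v}"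

text \<open>rho S: largest eigenvalue of the symmetric matrix S.\<close>
definition rho :: "real^'n^'n \<Rightarrow> real" where
  "rho S = Max (eigvals S)"

text \<open>s S: smallest nonzero eigenvalue of the symmetric matrix S.\<close>
definition smin_nz :: "real^'n^'n \<Rightarrow> real" where
  "smin_nz S = Min (eigvals S - {0})"

text \<open>Graph given by an edge-endpoint map; adjacency.\<close>
definition adj :: "('e \<Rightarrow> 'n \<times> 'n) \<Rightarrow> 'n \<Rightarrow> 'n \<Rightarrow> bool" where
  "adj ends i j \<longleftrightarrow> (\<exists>e. ends e = (i, j) \<or> ends e = (j, i))"

text \<open>Simple connected undirected graph whose edges are indexed by type 'e,
  each edge given an (arbitrary) orientation ends e = (head, tail).\<close>
definition simple_connected_graph :: "('e::finite \<Rightarrow> 'n::finite \<times> 'n) \<Rightarrow> bool" where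
  "simple_connected_graph ends \<longleftrightarrow>
     (\<forall>e. fst (ends e) \<noteq> snd (ends e)) \<and>
     (\<forall>e e'. ends e = ends e' \<or> ends e = prod.swap (ends e') \<longrightarrow> e = e') \<and>
     (\<forall>i j. (adj ends)\<^sup>*\<^sup>* i j)"

text \<open>Edge-node incidence matrix.\<close>
definition incidence :: "('e \<Rightarrow> 'n \<times> 'n) \<Rightarrow> real^'n^'e" where
  "incidence ends = (\<chi> e i. if i = fst (ends e) then 1 else if i = snd (ends e) then -1 else 0)"

text \<open>Separable objective and its gradient.\<close>
definition fsum :: "('n::finite \<Rightarrow> real \<Rightarrow> real) \<Rightarrow> real^'n \<Rightarrow> real" where
  "fsum f x = (\<Sum>i\<in>UNIV. f i (x $ i))"

definition grad :: "('n::finite \<Rightarrow> real \<Rightarrow> real) \<Rightarrow> real^'n \<Rightarrow> real^'n" where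
  "grad f' x = (\<chi> i. f' i (x $ i))"

end

theory Submission imports Defs begin

lemma quad_lin_zero:
  fixes a b :: real
  assumes "\<And>t. 0 \<le> 2 * t * a + t^2 * b" and "0 \<le> a"
  shows "a = 0"
proof (rule ccontr)
  assume "a \<noteq> 0" hence ap: "a > 0" using assms(2) by simp
  define c where "c = \<bar>b\<bar> + 1"
  have cp: "c > 0" unfolding c_def by simp
  define t where "t = - a / c"
  have "0 \<le> 2 * t * a + t^2 * b" by (rule assms(1))
  hence "0 \<le> (2 * t * a + t^2 * b) * c^2" using cp by simp
  also have "(2 * t * a + t^2 * b) * c^2 = a^2 * (b - 2 * c)"
    unfolding t_def using cp by (simp add: field_simps power2_eq_square)
  also have "\<dots> < 0" using ap unfolding c_def
    by (intro mult_pos_neg) (auto simp: abs_if)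
  finally show False by simp
qed

lemma quad_zero:
  fixes h :: "'a::real_inner \<Rightarrow> 'a"
  assumes lin: "linear h" and sym: "\<And>u w. inner u (h w) = inner (h u) w"
    and V: "subspace V" and nn: "\<And>v. v \<in> V \<Longrightarrow> 0 \<le> inner v (h v)"
    and v0: "v0 \<in> V" and z: "inner v0 (h v0) = 0" and hv: "h v0 \<in> V"
  shows "h v0 = 0"
proof -
  define w where "w = h v0"
  have "\<And>t. 0 \<le> 2 * t * inner w w + t^2 * inner w (h w)"
  proof -
    fix t :: real
    have "v0 + t *\<^sub>R w \<in> V" using V v0 hv unfolding w_def
      by (simp add: subspace_add subspace_scale)
    hence "0 \<le> inner (v0 + t *\<^sub>R w) (h (v0 + t *\<^sub>R w))" by (rule nn)
    also have "\<dots> = inner v0 (h v0) + t * inner v0 (h w) + t * inner w (h v0) + t^2 * inner w (h w)"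
      using lin by (simp add: linear_add linear_scale inner_add_left inner_add_right power2_eq_square algebra_simps)
    also have "inner v0 (h w) = inner w w" using sym[of v0 w] unfolding w_def by (simp add: inner_commute)
    also have "inner w (h v0) = inner w w" unfolding w_def by simp
    finally show "0 \<le> 2 * t * inner w w + t^2 * inner w (h w)" using z by simp
  qed
  hence "inner w w = 0" by (rule quad_lin_zero) simp
  thus ?thesis unfolding w_def by simp
qed

lemma sym_mat: fixes M :: "real^'n^'n" assumes "transpose M = M"
  shows "inner u (M *v w) = inner (M *v u) w"
  by (metis assms dot_lmul_matrix transpose_matrix_vector)

lemma eig_finite: fixes M :: "real^'n^'n" assumes sym: "transpose M = M"
  shows "finite (eigvals M)"
proof -
  define g where "g = (\<lambda>\<mu>. SOME v. v \<noteq> 0 \<and> M *v v = \<mu> *\<^sub>R v)"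
  have g: "g \<mu> \<noteq> 0 \<and> M *v g \<mu> = \<mu> *\<^sub>R g \<mu>" if "\<mu> \<in> eigvals M" for \<mu>
    using that unfolding eigvals_def g_def by (metis (mono_tags, lifting) mem_Collect_eq someI_ex)
  have inj: "inj_on g (eigvals M)"
  proof
    fix a b assume a: "a \<in> eigvals M" and b: "b \<in> eigvals M" and e: "g a = g b"
    have "a *\<^sub>R g a = M *v g a" using g[OF a] by simp
    also have "\<dots> = M *v g b" using e by simp
    also have "\<dots> = b *\<^sub>R g b" using g[OF b] by simp
    finally have "a *\<^sub>R g a = b *\<^sub>R g a" using e by simp
    hence "(a - b) *\<^sub>R g a = 0" by (simp add: scaleR_diff_left)
    thus "a = b" using g[OF a] by simp
  qed
  have po: "pairwise orthogonal (g ` eigvals M)"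
  proof (rule pairwiseI, clarify)
    fix a b assume a: "a \<in> eigvals M" and b: "b \<in> eigvals M" and ne: "g a \<noteq> g b"
    hence "a \<noteq> b" by auto
    have "a * inner (g a) (g b) = inner (M *v g a) (g b)" using g[OF a] by simp
    also have "\<dots> = inner (g a) (M *v g b)" using sym_mat[OF sym] by simp
    also have "\<dots> = b * inner (g a) (g b)" using g[OF b] by simp
    finally show "orthogonal (g a) (g b)" using \<open>a \<noteq> b\<close> unfolding orthogonal_def
      by (metis mult_cancel_right)
  qed
  have "0 \<notin> g ` eigvals M" using g by auto
  hence "independent (g ` eigvals M)" using po pairwise_orthogonal_independent by blast
  hence "finite (g ` eigvals M)" by (rule finiteI_independent)
  thus ?thesis using inj finite_imageD by blast
qed


lemma tr_inner: fixes A :: "real^'n^'m"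
  shows "inner u (A *v z) = inner (transpose A *v u) z"
  by (metis dot_lmul_matrix transpose_matrix_vector)

lemma rho_bound:
  fixes M :: "real^'n^'n"
  assumes sym: "transpose M = M" and psd: "\<And>v. 0 \<le> inner v (M *v v)"
  shows "norm (M *v v) \<le> rho M * norm v \<and> 0 \<le> rho M"
proof -
  define S where "S = sphere (0::real^'n) 1"
  have cS: "compact S" unfolding S_def by simp
  obtain e :: "real^'n" where "norm e = 1" using vector_choose_size[of 1] by auto
  hence neS: "S \<noteq> {}" unfolding S_def by auto
  have cont: "continuous_on S (\<lambda>v. norm (M *v v))" by (intro continuous_intros)
  obtain v0 where v0S: "v0 \<in> S" and mx: "\<And>y. y \<in> S \<Longrightarrow> norm (M *v y) \<le> norm (M *v v0)"
    using continuous_attains_sup[OF cS neS cont] by blast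
  define \<mu> where "\<mu> = norm (M *v v0)"
  have nv0: "norm v0 = 1" using v0S unfolding S_def by simp
  have bnd: "norm (M *v u) \<le> \<mu> * norm u" for u
  proof (cases "u = 0")
    case True thus ?thesis by simp
  next
    case False
    hence np: "norm u > 0" by simp
    have "u /\<^sub>R norm u \<in> S" unfolding S_def using False by simp
    hence "norm (M *v (u /\<^sub>R norm u)) \<le> \<mu>" using mx unfolding \<mu>_def by blast
    hence "norm (M *v u) / norm u \<le> \<mu>" by (simp add: matrix_vector_mult_scaleR divide_inverse_commute)
    thus ?thesis using np by (simp add: divide_le_eq mult.commute)
  qed
  define h where "h = (\<lambda>v. \<mu>^2 *\<^sub>R v - M *v (M *v v))"
  have lin: "linear h" unfolding h_def linear_iff by (simp add: algebra_simps)
  have hsym: "inner u (h w) = inner (h u) w" for u w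
    unfolding h_def using sym_mat[OF sym]
    by (simp add: inner_diff_left inner_diff_right)
  have nn: "0 \<le> inner v (h v)" if "v \<in> UNIV" for v
  proof -
    have "inner v (h v) = \<mu>^2 * (norm v)^2 - (norm (M *v v))^2"
      unfolding h_def using sym_mat[OF sym, of v "M *v v"]
      by (simp add: inner_diff_right power2_norm_eq_inner)
    moreover have "(norm (M *v v))^2 \<le> (\<mu> * norm v)^2"
      using bnd[of v] by (intro power_mono) auto
    ultimately show ?thesis by (simp add: power_mult_distrib)
  qed
  have z: "inner v0 (h v0) = 0"
    unfolding h_def using sym_mat[OF sym, of v0 "M *v v0"] nv0
    by (simp add: inner_diff_right power2_norm_eq_inner[symmetric] \<mu>_def)
  have "h v0 = 0" by (rule quad_zero[OF lin hsym subspace_UNIV nn _ z]) auto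
  hence MM: "M *v (M *v v0) = \<mu>^2 *\<^sub>R v0" unfolding h_def by simp
  have v0nz: "v0 \<noteq> 0" using nv0 by auto
  have mu_eig: "\<mu> \<in> eigvals M"
  proof (cases "M *v v0 + \<mu> *\<^sub>R v0 = 0")
    case False
    have "M *v (M *v v0 + \<mu> *\<^sub>R v0) = \<mu> *\<^sub>R (M *v v0 + \<mu> *\<^sub>R v0)"
      using MM by (simp add: algebra_simps power2_eq_square)
    thus ?thesis using False unfolding eigvals_def by blast
  next
    case True
    hence Mv: "M *v v0 = - \<mu> *\<^sub>R v0" by (simp add: eq_neg_iff_add_eq_0)
    have "0 \<le> inner v0 (M *v v0)" by (rule psd)
    also have "\<dots> = - \<mu>" using nv0 Mv by (simp add: power2_norm_eq_inner[symmetric])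
    finally have "\<mu> = 0" unfolding \<mu>_def by simp
    thus ?thesis using Mv v0nz unfolding eigvals_def by auto
  qed
  have "\<mu> \<le> rho M" unfolding rho_def using eig_finite[OF sym] mu_eig by simp
  moreover have "0 \<le> \<mu>" unfolding \<mu>_def by simp
  ultimately show ?thesis using bnd[of v] mult_right_mono[of \<mu> "rho M" "norm v"]
    by (meson norm_ge_zero order_trans)
qed


lemma smin_bound:
  fixes A :: "real^'n^'e"
  assumes nz: "\<exists>y. A *v y \<noteq> 0"
  shows "0 < smin_nz (A ** transpose A) \<and>
    (\<forall>v \<in> range ((*v) A). smin_nz (A ** transpose A) * (norm v)^2 \<le> (norm (transpose A *v v))^2)"
proof -
  define V where "V = range ((*v) A)"
  define M where "M = A ** transpose A"
  have subV: "subspace V" unfolding V_def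
    by (intro linear_subspace_image subspace_UNIV) simp
  define S where "S = sphere (0::real^'e) 1 \<inter> V"
  have cS: "compact S" unfolding S_def
    by (intro compact_Int_closed closed_subspace subV) simp
  obtain y where y: "A *v y \<noteq> 0" using nz by blast
  have "A *v (y /\<^sub>R norm (A *v y)) \<in> S" unfolding S_def V_def using y
    by (simp add: matrix_vector_mult_scaleR) (metis matrix_vector_mult_scaleR rangeI)
  hence neS: "S \<noteq> {}" by auto
  have cont: "continuous_on S (\<lambda>v. norm (transpose A *v v))" by (intro continuous_intros)
  obtain v0 where v0S: "v0 \<in> S" and mn: "\<And>u. u \<in> S \<Longrightarrow> norm (transpose A *v v0) \<le> norm (transpose A *v u)"
    using continuous_attains_inf[OF cS neS cont] by blast
  define \<mu> where "\<mu> = (norm (transpose A *v v0))^2"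
  have nv0: "norm v0 = 1" and v0V: "v0 \<in> V" using v0S unfolding S_def by auto
  have bnd: "\<mu> * (norm u)^2 \<le> (norm (transpose A *v u))^2" if uV: "u \<in> V" for u
  proof (cases "u = 0")
    case True thus ?thesis by simp
  next
    case False
    hence np: "norm u > 0" by simp
    have "u /\<^sub>R norm u \<in> S" unfolding S_def using False uV subV by (simp add: subspace_scale)
    hence "norm (transpose A *v v0) \<le> norm (transpose A *v (u /\<^sub>R norm u))" using mn by blast
    hence "norm (transpose A *v v0) \<le> norm (transpose A *v u) / norm u"
      by (simp add: matrix_vector_mult_scaleR divide_inverse_commute)
    hence "norm (transpose A *v v0) * norm u \<le> norm (transpose A *v u)" using np by (simp add: le_divide_eq)
    hence "(norm (transpose A *v v0) * norm u)^2 \<le> (norm (transpose A *v u))^2"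
      by (intro power_mono) auto
    thus ?thesis unfolding \<mu>_def by (simp add: power_mult_distrib)
  qed
  have Mv: "M *v v = A *v (transpose A *v v)" for v
    unfolding M_def by (metis matrix_vector_mul_assoc)
  have symM: "transpose M = M" unfolding M_def by (simp add: matrix_transpose_mul)
  define h where "h = (\<lambda>v. M *v v - \<mu> *\<^sub>R v)"
  have lin: "linear h" unfolding h_def linear_iff by (simp add: algebra_simps)
  have hsym: "inner u (h w) = inner (h u) w" for u w
    unfolding h_def using sym_mat[OF symM]
    by (simp add: inner_diff_left inner_diff_right)
  have ih: "inner v (h v) = (norm (transpose A *v v))^2 - \<mu> * (norm v)^2" for v
    unfolding h_def Mv using tr_inner[of v A "transpose A *v v"]
    by (simp add: inner_diff_right power2_norm_eq_inner)
  have nn: "0 \<le> inner v (h v)" if "v \<in> V" for v using bnd[OF that] ih[of v] by simp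
  have z: "inner v0 (h v0) = 0" using ih[of v0] nv0 unfolding \<mu>_def by simp
  have hV: "h v0 \<in> V" unfolding h_def Mv
    by (intro subspace_diff[OF subV] subspace_scale[OF subV] v0V) (simp add: V_def)
  have "h v0 = 0" by (rule quad_zero[OF lin hsym subV nn v0V z hV])
  hence Mv0: "M *v v0 = \<mu> *\<^sub>R v0" unfolding h_def by simp
  have v0nz: "v0 \<noteq> 0" using nv0 by auto
  have mu_nz: "\<mu> \<noteq> 0"
  proof
    assume "\<mu> = 0"
    hence A0: "transpose A *v v0 = 0" unfolding \<mu>_def by simp
    obtain y0 where "v0 = A *v y0" using v0V unfolding V_def by auto
    hence "inner v0 v0 = inner (transpose A *v v0) y0" using tr_inner[of v0 A y0] by simp
    hence "inner v0 v0 = 0" using A0 by simp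
    thus False using v0nz by simp
  qed
  define E where "E = eigvals M - {0}"
  have muE: "\<mu> \<in> E" unfolding E_def eigvals_def using Mv0 v0nz mu_nz by blast
  have finE: "finite E" unfolding E_def using eig_finite[OF symM] by simp
  have Enn: "0 \<le> l" if "l \<in> E" for l
  proof -
    have "l \<in> eigvals M" using that unfolding E_def by simp
    hence "\<exists>u. u \<noteq> 0 \<and> M *v u = l *\<^sub>R u" unfolding eigvals_def by simp
    then obtain u where u: "u \<noteq> 0" "M *v u = l *\<^sub>R u" by blast
    have "l * inner u u = inner u (M *v u)" using u by simp
    also have "\<dots> = (norm (transpose A *v u))^2" unfolding Mv using tr_inner[of u A "transpose A *v u"]
      by (simp add: power2_norm_eq_inner)
    finally have "0 \<le> l * inner u u" by simp
    moreover have "0 < inner u u" using u by simp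
    ultimately show ?thesis by (simp add: zero_le_mult_iff)
  qed
  have sE: "Min E \<in> E" using finE muE by (intro Min_in) auto
  have spos: "0 < Min E" using Enn[OF sE] sE unfolding E_def by force
  have sle: "Min E \<le> \<mu>" using finE muE by simp
  have "Min E * (norm v)^2 \<le> (norm (transpose A *v v))^2" if "v \<in> V" for v
    using bnd[OF that] mult_right_mono[OF sle, of "(norm v)^2"] by simp
  thus ?thesis using spos unfolding smin_nz_def E_def M_def V_def by blast
qed


lemma young:
  fixes u v :: "'a::real_inner"
  assumes c: "1 < c"
  shows "(norm (u + v))^2 \<le> c * (norm u)^2 + c / (c - 1) * (norm v)^2"
proof -
  have c1: "0 < c - 1" using c by simp
  have "0 \<le> (norm ((c - 1) *\<^sub>R u - v))^2" by simp
  also have "\<dots> = (c-1)^2 * (norm u)^2 - 2 * (c - 1) * inner u v + (norm v)^2"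
    unfolding power2_norm_eq_inner
    by (simp add: inner_diff_left inner_diff_right inner_commute power2_eq_square algebra_simps)
  finally have "2 * (c - 1) * inner u v \<le> (c-1)^2 * (norm u)^2 + (norm v)^2" by simp
  hence "2 * inner u v \<le> ((c-1)^2 * (norm u)^2 + (norm v)^2) / (c - 1)"
    using c1 by (subst pos_le_divide_eq[OF c1]) (simp add: algebra_simps)
  also have "\<dots> = (c - 1) * (norm u)^2 + (norm v)^2 / (c - 1)"
    using c1 by (simp add: field_simps power2_eq_square)
  finally have i: "2 * inner u v \<le> (c - 1) * (norm u)^2 + (norm v)^2 / (c - 1)" .
  have "(norm (u + v))^2 = (norm u)^2 + 2 * inner u v + (norm v)^2"
    by (simp add: power2_norm_eq_inner inner_add_left inner_add_right inner_commute)
  also have "\<dots> \<le> (norm u)^2 + ((c - 1) * (norm u)^2 + (norm v)^2 / (c - 1)) + (norm v)^2"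
    using i by simp
  also have "\<dots> = c * (norm u)^2 + c / (c - 1) * (norm v)^2"
    using c1 by (simp add: field_simps)
  finally show ?thesis .
qed

lemma scalar_lip:
  fixes g g' :: "real \<Rightarrow> real"
  assumes d: "\<And>t. (g has_real_derivative g' t) (at t)" and b: "\<And>t. \<bar>g' t\<bar> \<le> L"
  shows "\<bar>g s - g t\<bar> \<le> L * \<bar>s - t\<bar>"
proof -
  have key: "\<bar>g b - g a\<bar> \<le> L * \<bar>b - a\<bar>" if ab: "a < b" for a b
  proof -
    obtain z where "g b - g a = (b - a) * g' z" using MVT2[OF ab, of g g'] d by blast
    hence "\<bar>g b - g a\<bar> = \<bar>b - a\<bar> * \<bar>g' z\<bar>" by (simp add: abs_mult)
    also have "\<dots> \<le> \<bar>b - a\<bar> * L" by (intro mult_left_mono b) auto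
    finally show ?thesis by (simp add: mult.commute)
  qed
  consider "s < t" | "s = t" | "t < s" by linarith
  thus ?thesis
  proof cases
    case 1 thus ?thesis using key[OF 1] by (simp add: abs_minus_commute)
  next
    case 2 thus ?thesis by simp
  next
    case 3 thus ?thesis using key[OF 3] by simp
  qed
qed

lemma grad_lip:
  fixes f' f'' :: "'n::finite \<Rightarrow> real \<Rightarrow> real"
  assumes d: "\<And>i t. (f' i has_real_derivative f'' i t) (at t)"
    and b: "\<And>i t. m \<le> f'' i t \<and> f'' i t \<le> L" and m: "0 < m"
  shows "(norm (grad f' a - grad f' b))^2 \<le> L^2 * (norm (a - b))^2"
proof -
  have L0: "0 \<le> L" using b[of undefined 0] m by linarith
  have bb: "\<bar>f'' i t\<bar> \<le> L" for i t using b[of i t] m by auto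
  have c: "(f' i (a$i) - f' i (b$i))^2 \<le> L^2 * (a$i - b$i)^2" for i
  proof -
    have "\<bar>f' i (a$i) - f' i (b$i)\<bar> \<le> L * \<bar>a$i - b$i\<bar>"
      by (rule scalar_lip[OF d bb])
    hence "\<bar>f' i (a$i) - f' i (b$i)\<bar>^2 \<le> (L * \<bar>a$i - b$i\<bar>)^2"
      by (intro power_mono) auto
    thus ?thesis by (simp add: power_mult_distrib)
  qed
  have "(norm (grad f' a - grad f' b))^2 = (\<Sum>i\<in>UNIV. (f' i (a$i) - f' i (b$i))^2)"
    unfolding power2_norm_eq_inner inner_vec_def grad_def by (simp add: power2_eq_square)
  also have "\<dots> \<le> (\<Sum>i\<in>UNIV. L^2 * (a$i - b$i)^2)" by (intro sum_mono c)
  also have "\<dots> = L^2 * (norm (a - b))^2"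
    unfolding power2_norm_eq_inner inner_vec_def by (simp add: sum_distrib_left power2_eq_square)
  finally show ?thesis .
qed

theorem lemma3p11:
  fixes ends :: "'e::finite \<Rightarrow> 'n::finite \<times> 'n"
    and A :: "real^'n^'e" and B :: "real^'n^'n"
    and f f' f'' :: "'n \<Rightarrow> real \<Rightarrow> real"
    and m L \<alpha> \<beta> :: real and T :: nat
    and xstar :: "real^'n" and lamstar :: "real^'e"
    and xs :: "nat \<Rightarrow> nat \<Rightarrow> real^'n" and x :: "nat \<Rightarrow> real^'n"
    and lam :: "nat \<Rightarrow> real^'e"
    and dbar cbar gbar ebar :: real and k :: nat
  assumes graph: "simple_connected_graph ends"
    and A_def: "A = incidence ends"
    and f_deriv: "\<And>i t. (f i has_real_derivative f' i t) (at t)"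
    and f'_deriv: "\<And>i t. (f' i has_real_derivative f'' i t) (at t)"
    and m_pos: "0 < m" and mL: "m \<le> L"
    and f''_bounds: "\<And>i t. m \<le> f'' i t \<and> f'' i t \<le> L"
    and B_sym: "transpose B = B"
    and B_psd: "\<And>v. 0 \<le> v \<bullet> (B *v v)"
    and B_null: "\<And>v. B *v v = 0 \<longleftrightarrow> A *v v = 0"
    and B_sparse: "\<And>i j. i \<noteq> j \<Longrightarrow> B $ i $ j \<noteq> 0 \<Longrightarrow> adj ends i j"
    and B_rho: "rho B < m"
    and xstar_feas: "A *v xstar = 0"
    and xstar_min: "\<And>y. A *v y = 0 \<Longrightarrow> fsum f xstar \<le> fsum f y"
    and xstar_unique: "\<And>y. A *v y = 0 \<Longrightarrow> fsum f y \<le> fsum f xstar \<Longrightarrow> y = xstar"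
    and KKT: "grad f' xstar + transpose A *v lamstar = 0"
    and Bxstar: "B *v xstar = 0"
    and lamstar_range: "lamstar \<in> range (\<lambda>y. A *v y)"
    and \<alpha>_pos: "0 < \<alpha>" and \<beta>_pos: "0 < \<beta>" and T_pos: "1 \<le> T"
    and lam0: "lam 0 = 0"
    and inner0: "\<And>k. xs (Suc k) 0 = x k"
    and inner_step: "\<And>k t. 1 \<le> t \<Longrightarrow> t \<le> T \<Longrightarrow>
        xs (Suc k) t = xs (Suc k) (t - 1) - \<alpha> *\<^sub>R grad f' (xs (Suc k) (t - 1))
                       - \<alpha> *\<^sub>R (transpose A *v lam k) - \<alpha> *\<^sub>R (B *v x k)"
    and x_step: "\<And>k. x (Suc k) = xs (Suc k) T"
    and lam_step: "\<And>k. lam (Suc k) = lam k + \<beta> *\<^sub>R (A *v x (Suc k))"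
    and dbar: "1 < dbar" and cbar: "1 < cbar" and gbar: "1 < gbar" and ebar: "1 < ebar"
  shows "(norm (lam (Suc k) - lamstar))\<^sup>2 \<le>
      dbar * cbar / (\<alpha>\<^sup>2 * smin_nz (A ** transpose A))
        * (gbar + gbar * \<alpha>\<^sup>2 * L\<^sup>2 / (gbar - 1))
        * (norm (xs (Suc k) T - xs (Suc k) (T - 1)))\<^sup>2
    + dbar * cbar / (smin_nz (A ** transpose A) * (cbar - 1))
        * (ebar * \<beta>\<^sup>2 * (rho (transpose A ** A))\<^sup>2 + ebar * L\<^sup>2 / (ebar - 1))
        * (norm (xs (Suc k) T - xstar))\<^sup>2
    + dbar * (rho B)\<^sup>2 / (smin_nz (A ** transpose A) * (dbar - 1))
        * (norm (x k - xstar))\<^sup>2"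
proof -
  define y where "y = xs (Suc k) T"
  define z where "z = xs (Suc k) (T - 1)"
  define g where "g = grad f'"
  define At where "At = transpose A"
  define D where "D = lam (Suc k) - lamstar"
  have step: "y = z - \<alpha> *\<^sub>R g z - \<alpha> *\<^sub>R (At *v lam k) - \<alpha> *\<^sub>R (B *v x k)"
    using inner_step[of T k] T_pos unfolding y_def z_def g_def At_def by simp
  have "\<alpha> *\<^sub>R (At *v lam k) = (z - y) - \<alpha> *\<^sub>R g z - \<alpha> *\<^sub>R (B *v x k)"
    using step by (simp add: algebra_simps)
  hence "(1/\<alpha>) *\<^sub>R (\<alpha> *\<^sub>R (At *v lam k)) = (1/\<alpha>) *\<^sub>R ((z - y) - \<alpha> *\<^sub>R g z - \<alpha> *\<^sub>R (B *v x k))"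
    by simp
  hence Atlk: "At *v lam k = (1/\<alpha>) *\<^sub>R (z - y) - g z - B *v x k"
    using \<alpha>_pos by (simp add: scaleR_diff_right)
  have lk1: "lam (Suc k) = lam k + \<beta> *\<^sub>R (A *v y)" using lam_step[of k] x_step[of k] unfolding y_def by simp
  have Atls: "At *v lamstar = - g xstar" using KKT unfolding g_def At_def by (simp add: eq_neg_iff_add_eq_0 add.commute)
  have AAx: "At *v (A *v xstar) = 0" using xstar_feas by simp
  define Q where "Q = (1/\<alpha>) *\<^sub>R (z - y) + (- (g z - g y))"
  define R where "R = \<beta> *\<^sub>R (At *v (A *v (y - xstar))) + (- (g y - g xstar))"
  define w where "w = x k - xstar"
  have ident: "At *v D = (Q + R) + (- (B *v w))"
  proof -
    have "At *v D = At *v lam k + \<beta> *\<^sub>R (At *v (A *v y)) - At *v lamstar"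
      unfolding D_def lk1 by (simp add: matrix_vector_mult_diff_distrib matrix_vector_right_distrib matrix_vector_mult_scaleR del: transpose_matrix_vector)
    also have "\<dots> = (1/\<alpha>) *\<^sub>R (z - y) - g z - B *v x k + \<beta> *\<^sub>R (At *v (A *v y)) + g xstar"
      unfolding Atlk Atls by simp
    also have "\<dots> = (Q + R) + (- (B *v w))"
      unfolding Q_def R_def w_def using AAx Bxstar
      by (simp add: matrix_vector_mult_diff_distrib matrix_vector_mult_scaleR del: transpose_matrix_vector)
    finally show ?thesis .
  qed
  have lam_range: "lam j \<in> range ((*v) A)" for j
  proof (induction j)
    case 0 thus ?case using lam0 by (metis matrix_vector_mult_0_right rangeI)
  next
    case (Suc j)
    then obtain u where u: "lam j = A *v u" by auto
    have "lam (Suc j) = A *v (u + \<beta> *\<^sub>R x (Suc j))"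
      using lam_step[of j] u by (simp add: matrix_vector_right_distrib matrix_vector_mult_scaleR)
    thus ?case by simp
  qed
  have DV: "D \<in> range ((*v) A)"
  proof -
    obtain u1 where "lam (Suc k) = A *v u1" using lam_range[of "Suc k"] by auto
    moreover obtain u2 where "lamstar = A *v u2" using lamstar_range by auto
    ultimately have "D = A *v (u1 - u2)" unfolding D_def by (simp add: matrix_vector_mult_diff_distrib)
    thus ?thesis by simp
  qed
  have Anz: "\<exists>v. A *v v \<noteq> 0"
  proof (rule ccontr)
    assume "\<not> ?thesis"
    hence "\<forall>v. A *v v = 0 *v v" by simp
    hence A0: "A = 0" using matrix_eq by blast
    define e0 where "e0 = (undefined :: 'e)"
    have "A $ e0 $ fst (ends e0) = 1" unfolding A_def incidence_def by simp
    thus False using A0 by simp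
  qed
  define s where "s = smin_nz (A ** transpose A)"
  have s_pos: "0 < s" and sD: "s * (norm D)^2 \<le> (norm (At *v D))^2"
    using smin_bound[OF Anz] DV unfolding s_def At_def by blast+
  have Lg: "(norm (g a - g b))^2 \<le> L^2 * (norm (a - b))^2" for a b
    unfolding g_def by (rule grad_lip[OF f'_deriv f''_bounds m_pos])
  have rB: "norm (B *v v) \<le> rho B * norm v \<and> 0 \<le> rho B" for v
    by (rule rho_bound[OF B_sym B_psd])
  define P where "P = transpose A ** A"
  have Psym: "transpose P = P" unfolding P_def by (simp add: matrix_transpose_mul)
  have Ppsd: "0 \<le> inner v (P *v v)" for v
  proof -
    have "inner v (P *v v) = inner v (At *v (A *v v))" unfolding P_def At_def
      by (metis matrix_vector_mul_assoc)
    also have "\<dots> = inner (A *v v) (A *v v)" using tr_inner[of v At "A *v v"] unfolding At_def by simp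
    finally show ?thesis by simp
  qed
  have rP: "norm (P *v v) \<le> rho P * norm v \<and> 0 \<le> rho P" for v
    by (rule rho_bound[OF Psym Ppsd])
  have PAt: "At *v (A *v v) = P *v v" for v unfolding P_def At_def by (metis matrix_vector_mul_assoc)
  define N1 where "N1 = (norm (y - z))^2"
  define N2 where "N2 = (norm (y - xstar))^2"
  define N3 where "N3 = (norm (x k - xstar))^2"
  define q where "q = (gbar / \<alpha>^2 + gbar / (gbar - 1) * L^2) * N1"
  define r where "r = (ebar * \<beta>^2 * (rho P)^2 + ebar / (ebar - 1) * L^2) * N2"
  have g1: "0 < gbar - 1" and e1: "0 < ebar - 1" and c1: "0 < cbar - 1" and d1: "0 < dbar - 1"
    using gbar ebar cbar dbar by auto
  have Qb: "(norm Q)^2 \<le> q"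
  proof -
    have y1: "(norm Q)^2 \<le> gbar * (norm ((1/\<alpha>) *\<^sub>R (z - y)))^2 + gbar / (gbar - 1) * (norm (- (g z - g y)))^2"
      unfolding Q_def by (rule young[OF gbar])
    have y2: "(norm ((1/\<alpha>) *\<^sub>R (z - y)))^2 = N1 / \<alpha>^2"
      unfolding N1_def using \<alpha>_pos by (simp add: norm_minus_commute power_divide)
    have "(norm (- (g z - g y)))^2 \<le> L^2 * N1"
      using Lg[of z y] unfolding N1_def by (simp add: norm_minus_commute)
    hence y3: "gbar / (gbar - 1) * (norm (- (g z - g y)))^2 \<le> gbar / (gbar - 1) * (L^2 * N1)"
      using g1 gbar by (intro mult_left_mono) auto
    have "(norm Q)^2 \<le> gbar * (N1 / \<alpha>^2) + gbar / (gbar - 1) * (L^2 * N1)"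
      using y1[unfolded y2] y3 by linarith
    thus ?thesis unfolding q_def by (simp add: algebra_simps)
  qed
  have Rb: "(norm R)^2 \<le> r"
  proof -
    have y1: "(norm R)^2 \<le> ebar * (norm (\<beta> *\<^sub>R (At *v (A *v (y - xstar)))))^2 + ebar / (ebar - 1) * (norm (- (g y - g xstar)))^2"
      unfolding R_def by (rule young[OF ebar])
    have "(norm (\<beta> *\<^sub>R (At *v (A *v (y - xstar)))))^2 \<le> \<beta>^2 * ((rho P)^2 * N2)"
    proof -
      have "norm (P *v (y - xstar)) \<le> rho P * norm (y - xstar)" using rP by blast
      hence "(norm (P *v (y - xstar)))^2 \<le> (rho P * norm (y - xstar))^2" by (intro power_mono) auto
      thus ?thesis unfolding PAt N2_def using \<beta>_pos by (simp add: power_mult_distrib)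
    qed
    hence y2: "ebar * (norm (\<beta> *\<^sub>R (At *v (A *v (y - xstar)))))^2 \<le> ebar * (\<beta>^2 * ((rho P)^2 * N2))"
      using ebar by (intro mult_left_mono) auto
    have "(norm (- (g y - g xstar)))^2 \<le> L^2 * N2"
      using Lg[of y xstar] unfolding N2_def by (simp add: norm_minus_commute)
    hence y3: "ebar / (ebar - 1) * (norm (- (g y - g xstar)))^2 \<le> ebar / (ebar - 1) * (L^2 * N2)"
      using e1 ebar by (intro mult_left_mono) auto
    have "(norm R)^2 \<le> ebar * (\<beta>^2 * ((rho P)^2 * N2)) + ebar / (ebar - 1) * (L^2 * N2)"
      using y1 y2 y3 by linarith
    thus ?thesis unfolding r_def by (simp add: algebra_simps)
  qed
  have QRb: "(norm (Q + R))^2 \<le> cbar * q + cbar / (cbar - 1) * r"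
  proof -
    have "(norm (Q + R))^2 \<le> cbar * (norm Q)^2 + cbar / (cbar - 1) * (norm R)^2" by (rule young[OF cbar])
    also have "\<dots> \<le> cbar * q + cbar / (cbar - 1) * r"
      using Qb Rb cbar c1 by (intro add_mono mult_left_mono) auto
    finally show ?thesis .
  qed
  have Bb: "(norm (- (B *v w)))^2 \<le> (rho B)^2 * N3"
  proof -
    have "norm (B *v w) \<le> rho B * norm w" using rB by blast
    hence "(norm (B *v w))^2 \<le> (rho B * norm w)^2" by (intro power_mono) auto
    thus ?thesis unfolding N3_def w_def by (simp add: power_mult_distrib)
  qed
  have AtDb: "(norm (At *v D))^2 \<le> dbar * (cbar * q + cbar / (cbar - 1) * r) + dbar / (dbar - 1) * ((rho B)^2 * N3)"
  proof -
    have "(norm (At *v D))^2 \<le> dbar * (norm (Q + R))^2 + dbar / (dbar - 1) * (norm (- (B *v w)))^2"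
      unfolding ident by (rule young[OF dbar])
    also have "\<dots> \<le> dbar * (cbar * q + cbar / (cbar - 1) * r) + dbar / (dbar - 1) * ((rho B)^2 * N3)"
      using QRb Bb dbar d1 by (intro add_mono mult_left_mono) auto
    finally show ?thesis .
  qed
  have main: "(norm D)^2 \<le> (dbar * (cbar * q + cbar / (cbar - 1) * r) + dbar / (dbar - 1) * ((rho B)^2 * N3)) / s"
    using sD AtDb s_pos by (simp add: pos_le_divide_eq mult.commute)
  have t1: "dbar * cbar / (\<alpha>\<^sup>2 * s) * (gbar + gbar * \<alpha>\<^sup>2 * L\<^sup>2 / (gbar - 1)) * N1 = dbar * cbar * q / s"
    unfolding q_def using \<alpha>_pos s_pos g1 by (simp add: field_simps)
  have t2: "dbar * cbar / (s * (cbar - 1)) * (ebar * \<beta>\<^sup>2 * (rho P)\<^sup>2 + ebar * L\<^sup>2 / (ebar - 1)) * N2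
      = dbar * (cbar / (cbar - 1) * r) / s"
    unfolding r_def using s_pos e1 c1 by (simp add: field_simps)
  have t3: "dbar * (rho B)\<^sup>2 / (s * (dbar - 1)) * N3 = dbar / (dbar - 1) * ((rho B)^2 * N3) / s"
    using s_pos d1 by (simp add: field_simps)
  have "(dbar * (cbar * q + cbar / (cbar - 1) * r) + dbar / (dbar - 1) * ((rho B)^2 * N3)) / s
      = dbar * cbar * q / s + dbar * (cbar / (cbar - 1) * r) / s + dbar / (dbar - 1) * ((rho B)^2 * N3) / s"
    by (simp add: add_divide_distrib distrib_left mult.assoc)
  also have "\<dots> = dbar * cbar / (\<alpha>\<^sup>2 * s) * (gbar + gbar * \<alpha>\<^sup>2 * L\<^sup>2 / (gbar - 1)) * N1
     + dbar * cbar / (s * (cbar - 1)) * (ebar * \<beta>\<^sup>2 * (rho P)\<^sup>2 + ebar * L\<^sup>2 / (ebar - 1)) * N2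
     + dbar * (rho B)\<^sup>2 / (s * (dbar - 1)) * N3"
    unfolding t1 t2 t3 ..
  finally show ?thesis using main
    unfolding D_def s_def N1_def N2_def N3_def P_def y_def z_def
    by (simp add: norm_minus_commute)
qed
end
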